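(* Let $\mathfrak g$ be an almost abelian Lie algebra of real dimension $2n$ with a Hermitian structure $(J,g)$. Then there exists a unitary coframe $\varphi_1,\dots,\varphi_n$ of $(1,0)$-forms, a real number $\lambda$, a vector $v=(v_2,\dots,v_n)^t\in\mathbb C^{n-1}$ and a matrix $A=(A_{ij})_{2\le i,j\le n}\in M_{n-1}(\mathbb C)$ such that $$d\varphi_1=-\lambda\,\varphi_1\wedge\bar\varphi_1,\qquad d\varphi_i=-\bar v_i\,\varphi_1\wedge\bar\varphi_1+\sum_{j=2}^n\overline{A_{ij}}\,(\varphi_1+\bar\varphi_1)\wedge\varphi_j,\quad 2\le i\le n.$$
   Context: A Hermitian structure on a real Lie algebra $\mathfrak g$ is an integrable almost complex structure $J$ (i.e. $[x,y]-[Jx,Jy]+J[Jx,y]+J[x,Jy]=0$) together with a $J$-invariant inner product $g$. $\mathfrak g^{1,0}=\{x-\sqrt{-1}Jx\}$; $g$ is extended complex-bilinearly; a unitary coframe is the dual of a basis $e_1,\dots,e_n$ of $\mathfrak g^{1,0}$ with $g(e_i,\bar e_j)=\delta_{ij}$. $d$ is the Chevalley–Eilenberg differential ($d\alpha(x,y)=-\alpha([x,y])$). $\mathfrak g$ is almost abelian if it is non-abelian and contains an abelian ideal of codimension one. *)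

theory Defs
  imports "HOL-Analysis.Analysis"
begin

definition lie_algebra :: "('a::euclidean_space \<Rightarrow> 'a \<Rightarrow> 'a) \<Rightarrow> bool" where
  "lie_algebra br \<longleftrightarrow> bilinear br \<and> (\<forall>x y. br x y = - br y x)
     \<and> (\<forall>x y z. br x (br y z) + br y (br z x) + br z (br x y) = 0)"

definition almost_abelian :: "('a::euclidean_space \<Rightarrow> 'a \<Rightarrow> 'a) \<Rightarrow> bool" where
  "almost_abelian br \<longleftrightarrow> (\<exists>x y. br x y \<noteq> 0) \<and>
     (\<exists>h. subspace h \<and> dim h + 1 = DIM('a) \<and> (\<forall>x y. x \<in> h \<longrightarrow> br x y \<in> h)
        \<and> (\<forall>x\<in>h. \<forall>y\<in>h. br x y = 0))"

text \<open>Hermitian structure: integrable almost complex structure J and J-invariant inner product g.\<close>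
definition hermitian_structure ::
  "('a::euclidean_space \<Rightarrow> 'a \<Rightarrow> 'a) \<Rightarrow> ('a \<Rightarrow> 'a) \<Rightarrow> ('a \<Rightarrow> 'a \<Rightarrow> real) \<Rightarrow> bool" where
  "hermitian_structure br J g \<longleftrightarrow>
     linear J \<and> (\<forall>x. J (J x) = - x) \<and>
     (\<forall>x y. br x y - br (J x) (J y) + J (br (J x) y) + J (br x (J y)) = 0) \<and>
     bilinear g \<and> (\<forall>x y. g x y = g y x) \<and> (\<forall>x. x \<noteq> 0 \<longrightarrow> g x x > 0) \<and>
     (\<forall>x y. g (J x) (J y) = g x y)"

text \<open>Complexification: a pair (a,b) of real vectors stands for a + sqrt(-1) b.\<close>
definition cconj :: "'a::real_vector \<times> 'a \<Rightarrow> 'a \<times> 'a" where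
  "cconj p = (fst p, - snd p)"

definition gC :: "('a \<Rightarrow> 'a \<Rightarrow> real) \<Rightarrow> 'a \<times> 'a \<Rightarrow> 'a \<times> 'a \<Rightarrow> complex" where
  "gC g p q = Complex (g (fst p) (fst q) - g (snd p) (snd q)) (g (fst p) (snd q) + g (snd p) (fst q))"

definition fC :: "('a \<Rightarrow> complex) \<Rightarrow> 'a \<times> 'a \<Rightarrow> complex" where
  "fC \<phi> p = \<phi> (fst p) + \<i> * \<phi> (snd p)"

definition e10 :: "('a::real_vector \<Rightarrow> 'a) \<Rightarrow> 'a \<Rightarrow> 'a \<times> 'a" where
  "e10 J x = (x, - J x)"

text \<open>phi_1..phi_n is a unitary coframe of (1,0)-forms: it is the dual coframe of a basis
  e_1..e_n of g^{1,0} (e_j = x_j - sqrt(-1) J x_j) with g(e_i, conj e_j) = delta_ij.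
  A complex 1-form is a real-linear map 'a \<Rightarrow> complex (complex-linearly extended).\<close>
definition unitary_coframe ::
  "('a::euclidean_space \<Rightarrow> 'a) \<Rightarrow> ('a \<Rightarrow> 'a \<Rightarrow> real) \<Rightarrow> nat \<Rightarrow> (nat \<Rightarrow> 'a \<Rightarrow> complex) \<Rightarrow> bool" where
  "unitary_coframe J g n \<phi> \<longleftrightarrow>
     (\<forall>i\<in>{1..n}. linear (\<phi> i)) \<and>
     (\<exists>X :: nat \<Rightarrow> 'a. \<forall>i\<in>{1..n}. \<forall>j\<in>{1..n}.
        gC g (e10 J (X i)) (cconj (e10 J (X j))) = (if i = j then 1 else 0) \<and>
        fC (\<phi> i) (e10 J (X j)) = (if i = j then 1 else 0) \<and>
        fC (\<phi> i) (cconj (e10 J (X j))) = 0)"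

text \<open>Conjugate form, wedge product of 1-forms, Chevalley-Eilenberg differential of a 1-form
  (2-forms represented by their values on pairs of real vectors).\<close>
definition cform :: "('a \<Rightarrow> complex) \<Rightarrow> 'a \<Rightarrow> complex" where
  "cform \<alpha> x = cnj (\<alpha> x)"

definition wedge :: "('a \<Rightarrow> complex) \<Rightarrow> ('a \<Rightarrow> complex) \<Rightarrow> 'a \<Rightarrow> 'a \<Rightarrow> complex" where
  "wedge \<alpha> \<beta> x y = \<alpha> x * \<beta> y - \<alpha> y * \<beta> x"

definition dform :: "('a \<Rightarrow> 'a \<Rightarrow> 'a) \<Rightarrow> ('a \<Rightarrow> complex) \<Rightarrow> 'a \<Rightarrow> 'a \<Rightarrow> complex" where
  "dform br \<alpha> x y = - \<alpha> (br x y)"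

end

theory Submission
  imports Defs
begin


lemma g_repr:
  fixes g :: "'a::euclidean_space \<Rightarrow> 'a \<Rightarrow> real"
  assumes bl: "bilinear g"
  shows "g y x = (\<Sum>b\<in>Basis. g y b *\<^sub>R b) \<bullet> x"
proof -
  have lin: "linear (g y)" using bl by (simp add: bilinear_def)
  have "g y x = g y (\<Sum>b\<in>Basis. (x \<bullet> b) *\<^sub>R b)" by (simp add: euclidean_representation)
  also have "\<dots> = (\<Sum>b\<in>Basis. (x \<bullet> b) * g y b)"
    by (simp add: linear_sum[OF lin] linear_scale[OF lin])
  also have "\<dots> = (\<Sum>b\<in>Basis. g y b * (b \<bullet> x))"
    by (rule sum.cong) (simp_all add: inner_commute[of x])
  also have "\<dots> = (\<Sum>b\<in>Basis. g y b *\<^sub>R b) \<bullet> x"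
    by (simp add: inner_sum_left)
  finally show ?thesis .
qed

lemma g_orth_exists:
  fixes g :: "'a::euclidean_space \<Rightarrow> 'a \<Rightarrow> real"
  assumes bl: "bilinear g" and pos: "\<forall>x. x \<noteq> 0 \<longrightarrow> g x x > 0"
    and d: "dim S < DIM('a)"
  shows "\<exists>y. y \<noteq> 0 \<and> (\<forall>v\<in>S. g y v = 0)"
proof -
  define F where "F y = (\<Sum>b\<in>Basis. g y b *\<^sub>R b)" for y
  have rep: "g y x = F y \<bullet> x" for y x unfolding F_def by (rule g_repr[OF bl])
  have linF: "linear F"
  proof (rule linearI)
    fix a b show "F (a + b) = F a + F b"
      by (simp add: F_def bilinear_ladd[OF bl] scaleR_add_left sum.distrib)
  next
    fix c a show "F (c *\<^sub>R a) = c *\<^sub>R F a"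
      by (simp add: F_def bilinear_lmul[OF bl] scaleR_sum_right)
  qed
  have "inj F"
  proof (rule injI)
    fix a b assume "F a = F b"
    then have "F (a - b) = 0" using linear_diff[OF linF] by simp
    then have "g (a - b) (a - b) = 0" using rep by simp
    then have "a - b = 0" using pos by (metis less_irrefl)
    then show "a = b" by simp
  qed
  then have "surj F" using linear_injective_imp_surjective[OF linF] by simp
  obtain x where x: "x \<noteq> 0" "\<And>y. y \<in> span S \<Longrightarrow> orthogonal x y"
    using orthogonal_to_subspace_exists[OF d] by blast
  obtain y where y: "F y = x" using \<open>surj F\<close> by (metis surjD)
  have "y \<noteq> 0" using y x linear_0[OF linF] by auto
  moreover have "\<forall>v\<in>S. g y v = 0" using x(2) y rep by (simp add: orthogonal_def span_base)
  ultimately show ?thesis by blast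
qed

lemma n1: fixes a :: real assumes p: "a > 0"
  shows "inverse (sqrt (2 * a)) * inverse (sqrt (2 * a)) = inverse (2 * a)"
  using p by (simp flip: inverse_mult_distrib)
lemma n2: fixes a c :: real assumes p: "a > 0" and "c * c = inverse (2 * a)"
  shows "c * (c * a) = 1/2"
proof -
  have "c * (c * a) = (c * c) * a" by (simp add: mult.assoc)
  also have "\<dots> = 1/2" using assms by (simp add: field_simps)
  finally show ?thesis .
qed

locale herm =
  fixes g :: "'a::euclidean_space \<Rightarrow> 'a \<Rightarrow> real" and J :: "'a \<Rightarrow> 'a"
  assumes bl: "bilinear g" and gsym: "g x y = g y x" and pos: "x \<noteq> 0 \<Longrightarrow> g x x > 0"
    and linJ: "linear J" and JJ[simp]: "J (J x) = - x" and gJJ[simp]: "g (J x) (J y) = g x y"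
begin

lemma g_simps[simp]:
  "g (x + y) z = g x z + g y z" "g z (x + y) = g z x + g z y"
  "g (x - y) z = g x z - g y z" "g z (x - y) = g z x - g z y"
  "g (c *\<^sub>R x) z = c * g x z" "g z (c *\<^sub>R x) = c * g z x"
  "g (- x) z = - g x z" "g z (- x) = - g z x" "g 0 z = 0" "g z 0 = 0"
  using bl by (simp_all add: bilinear_ladd bilinear_radd bilinear_lsub bilinear_rsub
      bilinear_lmul bilinear_rmul bilinear_lneg bilinear_rneg bilinear_lzero bilinear_rzero)

lemma J_simps[simp]:
  "J (x + y) = J x + J y" "J (x - y) = J x - J y" "J (c *\<^sub>R x) = c *\<^sub>R J x"
  "J (- x) = - J x" "J 0 = 0"
  using linJ by (simp_all add: linear_add linear_diff linear_scale linear_neg linear_0)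

lemma gJ_swap: "g x (J y) = - g y (J x)"
proof -
  have "g x (J y) = g (J x) (J (J y))" by (rule gJJ[symmetric])
  also have "\<dots> = - g (J x) y" by simp
  finally show ?thesis by (metis gsym)
qed

lemma gJ_self[simp]: "g x (J x) = 0"
  using gJ_swap[of x x] by simp

lemma gJ_left: "g (J x) y = - g x (J y)"
  using gJ_swap gsym by metis

lemma normalize:
  assumes "y \<noteq> 0"
  shows "g ((inverse (sqrt (2 * g y y))) *\<^sub>R y) ((inverse (sqrt (2 * g y y))) *\<^sub>R y) = 1/2"
proof -
  define a where "a = g y y"
  have p: "a > 0" unfolding a_def by (rule pos[OF assms])
  define c where "c = inverse (sqrt (2 * a))"
  have "c * c = inverse (2 * a)" unfolding c_def by (rule n1[OF p])
  then have "c * (c * a) = 1/2" by (rule n2[OF p])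
  then show ?thesis by (simp only: g_simps c_def a_def)
qed

definition orth :: "nat \<Rightarrow> (nat \<Rightarrow> 'a) \<Rightarrow> bool" where
  "orth k X \<longleftrightarrow> (\<forall>i\<in>{1..k}. \<forall>j\<in>{1..k}.
      g (X i) (X j) = (if i = j then 1/2 else 0) \<and> g (X i) (J (X j)) = 0)"

lemma gram_schmidt:
  assumes dimn: "DIM('a) = 2 * n" and x1: "g x1 x1 = 1/2"
  shows "1 \<le> k \<Longrightarrow> k \<le> n \<Longrightarrow> \<exists>X. X 1 = x1 \<and> orth k X"
proof (induction k rule: nat_induct_at_least)
  case base
  show ?case by (rule exI[of _ "\<lambda>_. x1"]) (auto simp: orth_def x1)
next
  case (Suc k)
  then obtain X where X1: "X 1 = x1" and oX: "orth k X" by auto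
  define S where "S = X ` {1..k} \<union> (\<lambda>i. J (X i)) ` {1..k}"
  have fS: "finite S" by (simp add: S_def)
  have "card S \<le> card (X ` {1..k}) + card ((\<lambda>i. J (X i)) ` {1..k})"
    unfolding S_def by (rule card_Un_le)
  also have "\<dots> \<le> k + k" by (intro add_mono) (metis card_atLeastAtMost card_image_le finite_atLeastAtMost diff_Suc_1)+
  finally have "card S \<le> 2 * k" by simp
  moreover have "dim S \<le> card S" using dim_le_card[of S S] fS by (simp add: span_base subsetI)
  ultimately have "dim S < DIM('a)" using Suc dimn by linarith
  then obtain y where y: "y \<noteq> 0" "\<forall>v\<in>S. g y v = 0"
    using g_orth_exists[OF bl _] pos by blast
  define Y where "Y = (inverse (sqrt (2 * g y y))) *\<^sub>R y"
  have YY: "g Y Y = 1/2" using normalize[OF y(1)] by (simp add: Y_def)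
  have Yo: "g Y (X j) = 0" "g Y (J (X j)) = 0" if "j \<in> {1..k}" for j
    using y(2) that by (auto simp: Y_def S_def)
  define X' where "X' = X(Suc k := Y)"
  have "orth (Suc k) X'"
    unfolding orth_def
  proof (intro ballI)
    fix i j assume i: "i \<in> {1..Suc k}" and j: "j \<in> {1..Suc k}"
    show "g (X' i) (X' j) = (if i = j then 1 / 2 else 0) \<and> g (X' i) (J (X' j)) = 0"
    proof (cases "i = Suc k")
      case True
      then show ?thesis
      proof (cases "j = Suc k")
        case True then show ?thesis using \<open>i = Suc k\<close> YY by (simp add: X'_def)
      next
        case False
        then have "j \<in> {1..k}" using j by auto
        then show ?thesis using True False Yo by (simp add: X'_def)
      qed
    next
      case False
      then have ik: "i \<in> {1..k}" using i by auto
      then show ?thesis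
      proof (cases "j = Suc k")
        case True then show ?thesis using False Yo[OF ik] gsym[of "X i" Y] gJ_swap[of "X i" Y]
          by (simp add: X'_def)
      next
        case False2: False
        then have "j \<in> {1..k}" using j by auto
        then show ?thesis using False False2 oX ik by (simp add: X'_def orth_def)
      qed
    qed
  qed
  moreover have "X' 1 = x1" using X1 Suc by (simp add: X'_def)
  ultimately show ?case by blast
qed

lemma subspace_gl: "subspace {z. g z a = 0}"
  by (simp add: subspace_def)
lemma subspace_gr: "subspace {z. g a z = 0}"
  by (simp add: subspace_def)

lemma g_sum_left: "g (\<Sum>i\<in>A. f i) z = (\<Sum>i\<in>A. g (f i) z)"
  by (induction A rule: infinite_finite_induct) auto

lemma expansion:
  assumes dimn: "DIM('a) = 2 * n" and oX: "orth n X"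
  shows "x = (\<Sum>k\<in>{1..n}. (2 * g x (X k)) *\<^sub>R X k + (2 * g x (J (X k))) *\<^sub>R J (X k))"
proof -
  have o1: "g (X i) (X j) = (if i = j then 1/2 else 0)" and o2: "g (X i) (J (X j)) = 0"
    if "i \<in> {1..n}" "j \<in> {1..n}" for i j
    using oX that by (auto simp: orth_def)
  have o3: "g (J (X i)) (X j) = 0" if "i \<in> {1..n}" "j \<in> {1..n}" for i j
    using o2[OF that(2,1)] gsym by metis
  define V where "V = X ` {1..n} \<union> (\<lambda>i. J (X i)) ` {1..n}"
  have pw: "g b a = 0" if "a \<in> V" "b \<in> V" "a \<noteq> b" for a b
    using that o1 o2 o3 by (auto simp: V_def)
  have sq: "g a a = 1/2" if "a \<in> V" for a
    using that o1 by (auto simp: V_def)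
  have ind: "independent V"
    unfolding dependent_def
  proof
    assume "\<exists>a\<in>V. a \<in> span (V - {a})"
    then obtain a where a: "a \<in> V" "a \<in> span (V - {a})" by blast
    have "span (V - {a}) \<subseteq> {z. g z a = 0}"
      by (rule span_minimal) (use pw a(1) subspace_gl in auto)
    then have "g a a = 0" using a by auto
    then show False using sq[OF a(1)] by simp
  qed
  have inj1: "inj_on X {1..n}"
  proof (rule inj_onI)
    fix i j assume hi: "i \<in> {1..n}" and hj: "j \<in> {1..n}" and eq: "X i = X j"
    have a: "g (X i) (X i) = 1/2" using o1[OF hi hi] by simp
    have b: "g (X i) (X j) = (if i = j then 1/2 else 0)" using o1[OF hi hj] .
    show "i = j"
    proof (rule ccontr)
      assume "i \<noteq> j"
      then have "g (X i) (X j) = 0" using b by simp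
      then have "g (X i) (X i) = 0" using eq by simp
      then show False using a by simp
    qed
  qed
  have inj2: "inj_on (\<lambda>i. J (X i)) {1..n}"
  proof (rule inj_onI)
    fix i j assume hi: "i \<in> {1..n}" and hj: "j \<in> {1..n}" and eq: "J (X i) = J (X j)"
    have "J (J (X i)) = J (J (X j))" using eq by (rule arg_cong)
    then have "- X i = - X j" by (simp only: JJ)
    then have "X i = X j" by simp
    then show "i = j" using inj_onD[OF inj1 _ hi hj] by blast
  qed
  have disj: "X ` {1..n} \<inter> (\<lambda>i. J (X i)) ` {1..n} = {}"
  proof (rule ccontr)
    assume "X ` {1..n} \<inter> (\<lambda>i. J (X i)) ` {1..n} \<noteq> {}"
    then obtain i j where ij: "i \<in> {1..n}" "j \<in> {1..n}" "X i = J (X j)" by blast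
    have a: "g (X i) (X i) = 1/2" using o1[OF ij(1) ij(1)] by simp
    have "g (X i) (J (X j)) = 0" using o2[OF ij(1) ij(2)] .
    then have "g (X i) (X i) = 0" by (simp only: ij(3)[symmetric])
    then show False using a by simp
  qed
  have "card V = n + n"
    unfolding V_def using card_Un_disjoint[OF _ _ disj] card_image[OF inj1] card_image[OF inj2]
    by simp
  then have "dim (span V) = DIM('a)" using dim_span_eq_card_independent[OF ind] dimn by simp
  then have spV: "span V = UNIV" using dim_eq_full[of V] dim_span[of V] by simp
  define E where "E = (\<Sum>k\<in>{1..n}. (2 * g x (X k)) *\<^sub>R X k + (2 * g x (J (X k))) *\<^sub>R J (X k))"
  define r where "r = x - E"
  have "g r v = 0" if "v \<in> V" for v
  proof -
    from that consider (a) j where "j \<in> {1..n}" "v = X j" | (b) j where "j \<in> {1..n}" "v = J (X j)"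
      by (auto simp: V_def)
    then show ?thesis
    proof cases
      case a
      have "g E v = (\<Sum>k\<in>{1..n}. if k = j then g x (X j) else 0)"
        unfolding E_def g_sum_left
        by (rule sum.cong[OF refl]) (simp add: a(2) o1[OF _ a(1)] o3[OF _ a(1)])
      then show ?thesis using a by (simp add: r_def)
    next
      case b
      have "g E v = (\<Sum>k\<in>{1..n}. if k = j then g x (J (X j)) else 0)"
        unfolding E_def g_sum_left
        by (rule sum.cong[OF refl]) (simp add: b(2) o1[OF _ b(1)] o2[OF _ b(1)])
      then show ?thesis using b by (simp add: r_def)
    qed
  qed
  then have "span V \<subseteq> {z. g r z = 0}"
    by (intro span_minimal subspace_gr) auto
  then have "g r r = 0" using spV by auto
  then have "r = 0" using pos[of r] by (cases "r = 0") auto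
  then show ?thesis by (simp add: r_def E_def)
qed

end

lemma W_formula:
  fixes p q r s :: real
  shows "(complex_of_real p + \<i> * complex_of_real q) * cnj (complex_of_real r + \<i> * complex_of_real s)
     - (complex_of_real r + \<i> * complex_of_real s) * cnj (complex_of_real p + \<i> * complex_of_real q)
     = 2 * \<i> * complex_of_real (q * r - p * s)"
  by (simp add: complex_eq_iff algebra_simps)

lemma psi_formula:
  fixes p q :: real
  shows "(complex_of_real p + \<i> * complex_of_real q) + cnj (complex_of_real p + \<i> * complex_of_real q)
     = complex_of_real (2 * p)"
  by (simp add: complex_eq_iff)

lemma alg1:
  fixes p q r s m0 :: real
  shows "- (complex_of_real (2 * p) * (complex_of_real (2 * s) * (\<i> * complex_of_real m0))
           - complex_of_real (2 * r) * (complex_of_real (2 * q) * (\<i> * complex_of_real m0)))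
     = - complex_of_real (-2 * m0) * (2 * \<i> * complex_of_real (q * r - p * s))"
  by (simp add: complex_eq_iff algebra_simps)

lemma alg2:
  fixes p q r s :: real and c Sx Sy :: complex
  shows "- (complex_of_real (2 * p) * (complex_of_real (2 * s) * c + Sy)
           - complex_of_real (2 * r) * (complex_of_real (2 * q) * c + Sx))
     = - (2 * \<i> * c) * (2 * \<i> * complex_of_real (q * r - p * s))
       + (- complex_of_real (2 * p) * Sy + complex_of_real (2 * r) * Sx)"
proof -
  have "(2 * \<i> * c) * (2 * \<i> * complex_of_real (q * r - p * s)) = -4 * c * complex_of_real (q * r - p * s)"
    by (simp add: algebra_simps)
  then show ?thesis by (simp add: algebra_simps)
qed



context herm
begin

lemma main:
  fixes br :: "'a \<Rightarrow> 'a \<Rightarrow> 'a" and n :: nat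
  assumes la: "lie_algebra br" and aa: "almost_abelian br" and dimn: "DIM('a) = 2 * n"
    and integ: "\<forall>x y. br x y - br (J x) (J y) + J (br (J x) y) + J (br x (J y)) = 0"
  shows "\<exists>(\<phi> :: nat \<Rightarrow> 'a \<Rightarrow> complex) (lam :: real) (v :: nat \<Rightarrow> complex) (A :: nat \<Rightarrow> nat \<Rightarrow> complex).
    unitary_coframe J g n \<phi> \<and>
    (\<forall>x y. dform br (\<phi> 1) x y = - complex_of_real lam * wedge (\<phi> 1) (cform (\<phi> 1)) x y) \<and>
    (\<forall>i\<in>{2..n}. \<forall>x y. dform br (\<phi> i) x y =
        - cnj (v i) * wedge (\<phi> 1) (cform (\<phi> 1)) x y
        + (\<Sum>j=2..n. cnj (A i j) * wedge (\<lambda>z. \<phi> 1 z + cform (\<phi> 1) z) (\<phi> j) x y))"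
proof -
  have blb: "bilinear br" and anti: "\<And>x y. br x y = - br y x"
    using la unfolding lie_algebra_def by blast+
  have br_simps: "br (x + y) z = br x z + br y z" "br z (x + y) = br z x + br z y"
    "br (c *\<^sub>R x) z = c *\<^sub>R br x z" "br z (c *\<^sub>R x) = c *\<^sub>R br z x"
    "br (x - y) z = br x z - br y z" "br z (x - y) = br z x - br z y" for x y z c
    using blb by (simp_all add: bilinear_ladd bilinear_radd bilinear_lmul bilinear_rmul bilinear_lsub bilinear_rsub)
  have br_self: "br x x = 0" for x
  proof -
    have h: "br x x = - br x x" by (rule anti)
    have "br x x + br x x = br x x + - br x x" using h by (rule arg_cong)
    then have "(2::real) *\<^sub>R br x x = 0" by (simp add: scaleR_2)
    then show ?thesis by simp
  qed
  obtain h where hs: "subspace h" and hd: "dim h + 1 = DIM('a)"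
    and hid: "\<And>x y. x \<in> h \<Longrightarrow> br x y \<in> h" and hab: "\<And>x y. x \<in> h \<Longrightarrow> y \<in> h \<Longrightarrow> br x y = 0"
    using aa unfolding almost_abelian_def by blast
  have hid2: "br y x \<in> h" if "x \<in> h" for x y
  proof -
    have "br y x = - br x y" by (rule anti)
    then show ?thesis using subspace_neg[OF hs hid[OF that, of y]] by simp
  qed
  have "dim h < DIM('a)" using hd by simp
  moreover have "\<forall>x. x \<noteq> 0 \<longrightarrow> g x x > 0" using pos by blast
  ultimately obtain y0 where y0: "y0 \<noteq> 0" "\<forall>v\<in>h. g y0 v = 0"
    using g_orth_exists[OF bl] by blast
  define X1 where "X1 = (inverse (sqrt (2 * g y0 y0))) *\<^sub>R y0"
  have X1X1: "g X1 X1 = 1/2" using normalize[OF y0(1)] by (simp add: X1_def)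
  have X1h: "g v X1 = 0" if "v \<in> h" for v
  proof -
    have "g v X1 = g X1 v" by (rule gsym)
    also have "\<dots> = inverse (sqrt (2 * g y0 y0)) * g y0 v" by (simp only: X1_def g_simps)
    also have "\<dots> = 0" using y0(2) that by simp
    finally show ?thesis .
  qed
  have sh: "span h = h" using hs by (rule span_eq_iff[THEN iffD2])
  have "X1 \<notin> span h"
  proof
    assume "X1 \<in> span h"
    then have "g X1 X1 = 0" using X1h[of X1] sh by simp
    then show False using X1X1 by simp
  qed
  then have "dim (insert X1 h) = DIM('a)" using hd dim_insert[of X1 h] by simp
  then have "span (insert X1 h) = UNIV" using dim_eq_full[of "insert X1 h"] by simp
  then have dec: "\<exists>k. x - k *\<^sub>R X1 \<in> h" for x using sh span_insert[of X1 h] by blast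
  have hchar: "x \<in> h" if "g x X1 = 0" for x
  proof -
    obtain k where k: "x - k *\<^sub>R X1 \<in> h" using dec by blast
    then have "g (x - k *\<^sub>R X1) X1 = 0" by (rule X1h)
    then have "k = 0" using that X1X1 by simp
    then show ?thesis using k by simp
  qed
  have n1: "1 \<le> n" using dimn DIM_positive[where 'a='a] by linarith
  obtain X where XX1: "X 1 = X1" and oX: "orth n X"
    using gram_schmidt[OF dimn X1X1 n1 order_refl] by blast
  have o1: "g (X i) (X j) = (if i = j then 1/2 else 0)" and o2: "g (X i) (J (X j)) = 0"
    if "i \<in> {1..n}" "j \<in> {1..n}" for i j
    using oX that by (auto simp: orth_def)
  have o3: "g (J (X i)) (X j) = 0" if "i \<in> {1..n}" "j \<in> {1..n}" for i j
    using o2[OF that(2,1)] gsym by metis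
  have JX1h: "J X1 \<in> h"
  proof (rule hchar)
    have "g (J X1) X1 = g X1 (J X1)" by (rule gsym)
    then show "g (J X1) X1 = 0" by simp
  qed
  have Xkh: "X k \<in> h" "J (X k) \<in> h" if "k \<in> {2..n}" for k
  proof -
    have k1: "k \<in> {1..n}" "k \<noteq> 1" using that by auto
    have one: "1 \<in> {1..n}" using n1 by simp
    have "g (X k) X1 = 0" using o1[OF k1(1) one] k1(2) XX1 by simp
    then show "X k \<in> h" by (rule hchar)
    have "g (J (X k)) X1 = 0" using o3[OF k1(1) one] XX1 by simp
    then show "J (X k) \<in> h" by (rule hchar)
  qed
  have F3: "br X1 (J z) = J (br X1 z)" if "z \<in> h" "J z \<in> h" for z
  proof -
    have "br X1 z - br (J X1) (J z) + J (br (J X1) z) + J (br X1 (J z)) = 0" using integ by blast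
    then have "br X1 z + J (br X1 (J z)) = 0" using hab[OF JX1h that(2)] hab[OF JX1h that(1)] by simp
    then have "J (br X1 z + J (br X1 (J z))) = 0" by simp
    then show ?thesis by (simp add: algebra_simps)
  qed
  define \<phi> where "\<phi> i y = complex_of_real (g y (X i)) + \<i> * complex_of_real (g y (J (X i)))" for i y
  have phi_simps: "\<phi> i (a + b) = \<phi> i a + \<phi> i b" "\<phi> i (c *\<^sub>R a) = complex_of_real c * \<phi> i a"
    "\<phi> i (a - b) = \<phi> i a - \<phi> i b"  for i a b c
    by (simp_all add: \<phi>_def algebra_simps)
  have phi_sum: "\<phi> i (\<Sum>k\<in>K. f k) = (\<Sum>k\<in>K. \<phi> i (f k))" for i K f
  proof -
    have phi0: "\<phi> i 0 = 0" by (simp add: \<phi>_def)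
    show ?thesis by (induction K rule: infinite_finite_induct) (auto simp: phi_simps phi0)
  qed
  have phiJ: "\<phi> i (J z) = \<i> * \<phi> i z" for i z
    by (simp add: \<phi>_def gJ_left algebra_simps)
  have lin: "linear (\<phi> i)" for i
    by (rule linearI) (simp_all add: phi_simps scaleR_conv_of_real)
  have uc: "unitary_coframe J g n \<phi>"
    unfolding unitary_coframe_def
  proof (intro conjI ballI exI[of _ X])
    fix i assume "i \<in> {1..n}" show "linear (\<phi> i)" by (rule lin)
  next
    fix i j assume ij: "i \<in> {1..n}" "j \<in> {1..n}"
    show "gC g (e10 J (X i)) (cconj (e10 J (X j))) = (if i = j then 1 else 0)"
      using o1[OF ij] o2[OF ij] o3[OF ij]
      by (simp add: gC_def e10_def cconj_def complex_eq_iff)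
    show "fC (\<phi> i) (e10 J (X j)) = (if i = j then 1 else 0)"
      using o1[OF ij(2,1)] o2[OF ij] o2[OF ij(2,1)] o3[OF ij(2,1)] gsym[of "X j" "X i"] gsym[of "J (X j)" "X i"]
      by (simp add: fC_def e10_def \<phi>_def complex_eq_iff)
    show "fC (\<phi> i) (cconj (e10 J (X j))) = 0"
      using o1[OF ij(2,1)] o2[OF ij] o2[OF ij(2,1)] o3[OF ij(2,1)] gsym[of "X j" "X i"] gsym[of "J (X j)" "X i"]
      by (simp add: fC_def e10_def cconj_def \<phi>_def complex_eq_iff)
  qed
  define rest where "rest x = (2 * g x (J X1)) *\<^sub>R J X1 +
     (\<Sum>k\<in>{2..n}. (2 * g x (X k)) *\<^sub>R X k + (2 * g x (J (X k))) *\<^sub>R J (X k))" for x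
  have decomp: "x = (2 * g x X1) *\<^sub>R X1 + rest x" for x
  proof -
    have "x = (\<Sum>k\<in>{1..n}. (2 * g x (X k)) *\<^sub>R X k + (2 * g x (J (X k))) *\<^sub>R J (X k))"
      by (rule expansion[OF dimn oX])
    also have "\<dots> = (2 * g x (X 1)) *\<^sub>R X 1 + (2 * g x (J (X 1))) *\<^sub>R J (X 1) +
       (\<Sum>k\<in>{Suc 1..n}. (2 * g x (X k)) *\<^sub>R X k + (2 * g x (J (X k))) *\<^sub>R J (X k))"
      by (rule sum.atLeast_Suc_atMost[OF n1])
    also have "\<dots> = (2 * g x X1) *\<^sub>R X1 + rest x"
      unfolding rest_def XX1 numeral_2_eq_2 by (simp add: add.assoc)
    finally show ?thesis .
  qed
  have resth: "rest x \<in> h" for x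
    unfolding rest_def
    by (intro subspace_add[OF hs] subspace_scale[OF hs] subspace_sum[OF hs] JX1h Xkh) auto
  have brxy: "br x y = (2 * g x X1) *\<^sub>R br X1 (rest y) - (2 * g y X1) *\<^sub>R br X1 (rest x)" for x y
  proof -
    have "br x y = br ((2 * g x X1) *\<^sub>R X1 + rest x) ((2 * g y X1) *\<^sub>R X1 + rest y)"
      by (simp only: decomp[symmetric])
    also have "\<dots> = (2 * g x X1) *\<^sub>R br X1 (rest y) - (2 * g y X1) *\<^sub>R br X1 (rest x)"
      using hab[OF resth resth] anti[of "rest x" X1]
      by (simp add: br_simps br_self)
    finally show ?thesis .
  qed
  have linB: "linear (br X1)" using blb by (simp add: bilinear_def)
  have Brest: "br X1 (rest x) = (2 * g x (J X1)) *\<^sub>R br X1 (J X1) +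
     (\<Sum>k\<in>{2..n}. (2 * g x (X k)) *\<^sub>R br X1 (X k) + (2 * g x (J (X k))) *\<^sub>R J (br X1 (X k)))" for x
    unfolding rest_def
    by (simp add: linear_add[OF linB] linear_scale[OF linB] linear_sum[OF linB] F3 Xkh)
  have phiBrest: "\<phi> i (br X1 (rest x)) = complex_of_real (2 * g x (J X1)) * \<phi> i (br X1 (J X1)) +
     (\<Sum>k\<in>{2..n}. 2 * \<phi> k x * \<phi> i (br X1 (X k)))" for i x
    unfolding Brest phi_simps phi_sum phiJ
  proof (rule arg_cong[where f="\<lambda>t. complex_of_real (2 * g x (J X1)) * \<phi> i (br X1 (J X1)) + t"],
      rule sum.cong[OF refl])
    fix k
    show "complex_of_real (2 * g x (X k)) * \<phi> i (br X1 (X k)) +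
        complex_of_real (2 * g x (J (X k))) * (\<i> * \<phi> i (br X1 (X k))) =
        2 * \<phi> k x * \<phi> i (br X1 (X k))"
      unfolding \<phi>_def[of k x] by (simp add: algebra_simps)
  qed
  define c where "c i = \<phi> i (br X1 (J X1))" for i
  define d where "d i k = \<phi> i (br X1 (X k))" for i k
  define mu where "mu = g (br X1 (J X1)) (J X1)"
  have phi1: "\<phi> 1 z = complex_of_real (g z X1) + \<i> * complex_of_real (g z (J X1))" for z
    unfolding \<phi>_def XX1 by (rule refl)
  have dform_eq: "dform br (\<phi> i) x y = - (complex_of_real (2 * g x X1) * \<phi> i (br X1 (rest y))
      - complex_of_real (2 * g y X1) * \<phi> i (br X1 (rest x)))" for i x y
    unfolding dform_def brxy[of x y] phi_simps by (rule refl)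
  have W: "wedge (\<phi> 1) (cform (\<phi> 1)) x y =
      2 * \<i> * complex_of_real (g x (J X1) * g y X1 - g x X1 * g y (J X1))" for x y
    unfolding wedge_def cform_def phi1 by (rule W_formula)
  have psi: "\<phi> 1 z + cform (\<phi> 1) z = complex_of_real (2 * g z X1)" for z
    unfolding cform_def phi1 by (rule psi_formula)
  have d1: "d 1 k = 0" if "k \<in> {2..n}" for k
  proof -
    have a: "br X1 (X k) \<in> h" by (rule hid2[OF Xkh(1)[OF that]])
    have b: "br X1 (J (X k)) \<in> h" by (rule hid2[OF Xkh(2)[OF that]])
    have r: "g (br X1 (X k)) X1 = 0" by (rule X1h[OF a])
    have "g (br X1 (X k)) (J X1) = - g X1 (J (br X1 (X k)))" by (rule gJ_swap)
    also have "\<dots> = - g X1 (br X1 (J (X k)))" using F3[OF Xkh(1)[OF that] Xkh(2)[OF that]] by simp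
    also have "\<dots> = - g (br X1 (J (X k))) X1" using gsym[of X1 "br X1 (J (X k))"] by simp
    also have "\<dots> = 0" using X1h[OF b] by simp
    finally have "g (br X1 (X k)) (J X1) = 0" .
    then show ?thesis unfolding d_def phi1 using r by simp
  qed
  have c1: "c 1 = \<i> * complex_of_real mu"
    unfolding c_def phi1 mu_def using X1h[OF hid2[OF JX1h]] by simp
  have P1: "\<phi> 1 (br X1 (rest x)) = complex_of_real (2 * g x (J X1)) * (\<i> * complex_of_real mu)" for x
    using phiBrest[of 1 x] d1 unfolding c_def[symmetric] d_def[symmetric] c1 by simp
  have Pi: "\<phi> i (br X1 (rest x)) = complex_of_real (2 * g x (J X1)) * c i +
     (\<Sum>k\<in>{2..n}. 2 * \<phi> k x * d i k)" for i x
    using phiBrest[of i x] unfolding c_def d_def .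
  have eq1: "dform br (\<phi> 1) x y = - complex_of_real (-2 * mu) * wedge (\<phi> 1) (cform (\<phi> 1)) x y" for x y
    unfolding dform_eq P1 W by (rule alg1)
  have sumeq: "(\<Sum>j=2..n. (-2 * d i j) * wedge (\<lambda>z. \<phi> 1 z + cform (\<phi> 1) z) (\<phi> j) x y)
      = - complex_of_real (2 * g x X1) * (\<Sum>k\<in>{2..n}. 2 * \<phi> k y * d i k)
        + complex_of_real (2 * g y X1) * (\<Sum>k\<in>{2..n}. 2 * \<phi> k x * d i k)" for i x y
  proof -
    have "(\<Sum>j=2..n. (-2 * d i j) * wedge (\<lambda>z. \<phi> 1 z + cform (\<phi> 1) z) (\<phi> j) x y)
      = (\<Sum>j=2..n. - complex_of_real (2 * g x X1) * (2 * \<phi> j y * d i j)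
          + complex_of_real (2 * g y X1) * (2 * \<phi> j x * d i j))"
      by (rule sum.cong[OF refl]) (unfold wedge_def psi, simp add: algebra_simps)
    also have "\<dots> = - complex_of_real (2 * g x X1) * (\<Sum>k\<in>{2..n}. 2 * \<phi> k y * d i k)
        + complex_of_real (2 * g y X1) * (\<Sum>k\<in>{2..n}. 2 * \<phi> k x * d i k)"
      by (simp only: sum.distrib sum_distrib_left)
    finally show ?thesis .
  qed
  have eq2: "dform br (\<phi> i) x y =
        - cnj (cnj (2 * \<i> * c i)) * wedge (\<phi> 1) (cform (\<phi> 1)) x y
        + (\<Sum>j=2..n. cnj (cnj (-2 * d i j)) * wedge (\<lambda>z. \<phi> 1 z + cform (\<phi> 1) z) (\<phi> j) x y)" for i x y
    unfolding dform_eq Pi W complex_cnj_cnj sumeq by (rule alg2)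
  show ?thesis
    apply (rule exI[of _ \<phi>], rule exI[of _ "-2 * mu"], rule exI[of _ "\<lambda>i. cnj (2 * \<i> * c i)"],
        rule exI[of _ "\<lambda>i j. cnj (-2 * d i j)"])
    apply (intro conjI allI ballI)
      apply (rule uc)
     apply (rule eq1)
    apply (rule eq2)
    done
qed
end

theorem lemma5:
  fixes br :: "'a::euclidean_space \<Rightarrow> 'a \<Rightarrow> 'a" and J :: "'a \<Rightarrow> 'a"
    and g :: "'a \<Rightarrow> 'a \<Rightarrow> real" and n :: nat
  assumes "lie_algebra br" and "almost_abelian br" and "DIM('a) = 2 * n"
    and "hermitian_structure br J g"
  shows "\<exists>(\<phi> :: nat \<Rightarrow> 'a \<Rightarrow> complex) (lam :: real) (v :: nat \<Rightarrow> complex) (A :: nat \<Rightarrow> nat \<Rightarrow> complex).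
    unitary_coframe J g n \<phi> \<and>
    (\<forall>x y. dform br (\<phi> 1) x y = - complex_of_real lam * wedge (\<phi> 1) (cform (\<phi> 1)) x y) \<and>
    (\<forall>i\<in>{2..n}. \<forall>x y. dform br (\<phi> i) x y =
        - cnj (v i) * wedge (\<phi> 1) (cform (\<phi> 1)) x y
        + (\<Sum>j=2..n. cnj (A i j) * wedge (\<lambda>z. \<phi> 1 z + cform (\<phi> 1) z) (\<phi> j) x y))"
proof -
  have H: "herm g J" using assms(4) unfolding hermitian_structure_def herm_def by blast
  have integ: "\<forall>x y. br x y - br (J x) (J y) + J (br (J x) y) + J (br x (J y)) = 0"
    using assms(4) unfolding hermitian_structure_def by blast
  show ?thesis by (rule herm.main[OF H assms(1) assms(2) assms(3) integ])
qed

end
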